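(* Let $R_1$ and $R_2$ be finite commutative principal ideal rings with unity, and let $R=R_1\times R_2$. Suppose $\operatorname{diam}(\Gamma(R_1))=\operatorname{diam}(\Gamma(R_2))=1$. Then $\overline{\Gamma(R)}$ is not a divisor graph.
   Context: For a commutative ring $S$ with unity, $Z(S)$ denotes its set of zero divisors. The zero divisor graph $\Gamma(S)$ is the simple graph with vertex set $Z(S)\setminus\{0\}$, distinct $a,b$ adjacent iff $ab=0$; its complement $\overline{\Gamma(S)}$ has the same vertex set with distinct $a,b$ adjacent iff $ab\neq 0$. The diameter of a graph is the maximum distance (number of edges in a shortest path) between pairs of vertices. For a nonempty set $T$ of positive integers, the divisor graph $G(T)$ has vertex set $T$, with distinct $i,j$ adjacent iff $i\mid j$ or $j\mid i$; a graph is a divisor graph if it is isomorphic to some $G(T)$. *)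

theory Defs
  imports "HOL-Algebra.Algebra" "HOL-Library.Extended_Nat"
begin

definition principal_ideal_ring :: "('a, 'm) ring_scheme \<Rightarrow> bool" where
  "principal_ideal_ring R \<longleftrightarrow> cring R \<and> (\<forall>I. ideal I R \<longrightarrow> principalideal I R)"

definition zero_divisors :: "('a, 'm) ring_scheme \<Rightarrow> 'a set" where
  "zero_divisors R = {a \<in> carrier R. \<exists>b \<in> carrier R. b \<noteq> \<zero>\<^bsub>R\<^esub> \<and> a \<otimes>\<^bsub>R\<^esub> b = \<zero>\<^bsub>R\<^esub>}"

definition zdg_vertices :: "('a, 'm) ring_scheme \<Rightarrow> 'a set" where
  "zdg_vertices R = zero_divisors R - {\<zero>\<^bsub>R\<^esub>}"

definition zdg_adj :: "('a, 'm) ring_scheme \<Rightarrow> 'a \<Rightarrow> 'a \<Rightarrow> bool" where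
  "zdg_adj R a b \<longleftrightarrow> a \<noteq> b \<and> a \<otimes>\<^bsub>R\<^esub> b = \<zero>\<^bsub>R\<^esub>"

definition zdg_compl_adj :: "('a, 'm) ring_scheme \<Rightarrow> 'a \<Rightarrow> 'a \<Rightarrow> bool" where
  "zdg_compl_adj R a b \<longleftrightarrow> a \<noteq> b \<and> a \<otimes>\<^bsub>R\<^esub> b \<noteq> \<zero>\<^bsub>R\<^esub>"

definition walk_len :: "'v set \<Rightarrow> ('v \<Rightarrow> 'v \<Rightarrow> bool) \<Rightarrow> 'v \<Rightarrow> 'v \<Rightarrow> nat \<Rightarrow> bool" where
  "walk_len V E a b n \<longleftrightarrow> (\<exists>p :: nat \<Rightarrow> 'v. p 0 = a \<and> p n = b \<and> (\<forall>i\<le>n. p i \<in> V)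
      \<and> (\<forall>i<n. E (p i) (p (Suc i))))"

text \<open>Distance (infinite if no path).\<close>
definition graph_dist :: "'v set \<Rightarrow> ('v \<Rightarrow> 'v \<Rightarrow> bool) \<Rightarrow> 'v \<Rightarrow> 'v \<Rightarrow> enat" where
  "graph_dist V E a b = (INF n \<in> {n. walk_len V E a b n}. enat n)"

definition graph_diam :: "'v set \<Rightarrow> ('v \<Rightarrow> 'v \<Rightarrow> bool) \<Rightarrow> enat" where
  "graph_diam V E = (SUP a \<in> V. SUP b \<in> V. graph_dist V E a b)"

definition is_divisor_graph :: "'v set \<Rightarrow> ('v \<Rightarrow> 'v \<Rightarrow> bool) \<Rightarrow> bool" where
  "is_divisor_graph V E \<longleftrightarrow> (\<exists>(T :: nat set) f. T \<noteq> {} \<and> (\<forall>t\<in>T. 0 < t) \<and> bij_betw f V T \<and>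
      (\<forall>a\<in>V. \<forall>b\<in>V. a \<noteq> b \<longrightarrow> (E a b \<longleftrightarrow> (f a dvd f b \<or> f b dvd f a))))"

end

theory Submission
  imports Defs
begin

lemma diam1_edge:
  assumes "graph_diam V E = 1"
  shows "\<exists>a\<in>V. \<exists>b\<in>V. E a b"
proof (rule ccontr)
  assume ne: "\<not> (\<exists>a\<in>V. \<exists>b\<in>V. E a b)"
  have w: "walk_len V E a b n \<Longrightarrow> n = 0 \<and> a = b" for a b n
  proof -
    assume "walk_len V E a b n"
    then obtain p where p: "p 0 = a" "p n = b" "\<forall>i\<le>n. p i \<in> V" "\<forall>i<n. E (p i) (p (Suc i))"
      unfolding walk_len_def by auto
    show ?thesis
    proof (cases n)
      case 0 then show ?thesis using p by simp
    next
      case (Suc m)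
      then have "E (p 0) (p 1)" "p 0 \<in> V" "p 1 \<in> V" using p by auto
      then show ?thesis using ne by blast
    qed
  qed
  have w0: "a \<in> V \<Longrightarrow> walk_len V E a a 0" for a
    unfolding walk_len_def by (rule exI[of _ "\<lambda>_. a"]) simp
  have d0: "a \<in> V \<Longrightarrow> graph_dist V E a a = 0" for a
  proof -
    assume "a \<in> V"
    then have "{n. walk_len V E a a n} = {0}" using w w0 by auto
    then show ?thesis unfolding graph_dist_def by (simp add: zero_enat_def)
  qed
  have dinf: "a \<noteq> b \<Longrightarrow> graph_dist V E a b = \<infinity>" for a b
  proof -
    assume "a \<noteq> b"
    then have "{n. walk_len V E a b n} = {}" using w by auto
    then show ?thesis unfolding graph_dist_def by (metis Inf_empty image_empty top_enat_def)
  qed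
  show False
  proof (cases "\<exists>a\<in>V. \<exists>b\<in>V. a \<noteq> b")
    case True
    then obtain a b where ab: "a \<in> V" "b \<in> V" "a \<noteq> b" by blast
    have "graph_dist V E a b \<le> (SUP b\<in>V. graph_dist V E a b)" using ab by (intro SUP_upper) 
    also have "\<dots> \<le> graph_diam V E" unfolding graph_diam_def using ab by (intro SUP_upper)
    finally show False using assms dinf[OF ab(3)] by simp
  next
    case False
    then have "\<forall>a\<in>V. (SUP b\<in>V. graph_dist V E a b) = 0"
      using d0 by (metis (no_types, lifting) SUP_bot_conv(2) bot_enat_def)
    then have "graph_diam V E = 0" unfolding graph_diam_def
      by (metis (no_types, lifting) SUP_bot_conv(2) bot_enat_def)
    then show False using assms by simp
  qed
qed


lemma RDP_mult: "(a,b) \<otimes>\<^bsub>RDirProd R S\<^esub> (c,d) = (a \<otimes>\<^bsub>R\<^esub> c, b \<otimes>\<^bsub>S\<^esub> d)"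
  by (simp add: RDirProd_def DirProd_def monoid.defs)
lemma RDP_zero: "\<zero>\<^bsub>RDirProd R S\<^esub> = (\<zero>\<^bsub>R\<^esub>, \<zero>\<^bsub>S\<^esub>)"
  by (simp add: RDirProd_def DirProd_def monoid.defs)

lemma chain7:
  fixes ya yb yc yd ye yf yg :: nat
  assumes "ya \<noteq> yb"
    and "ya dvd yb \<or> yb dvd ya" "ya dvd yd \<or> yd dvd ya" "yd dvd ye \<or> ye dvd yd"
        "yd dvd yf \<or> yf dvd yd" "yf dvd yb \<or> yb dvd yf" "yf dvd yc \<or> yc dvd yf"
        "yc dvd ye \<or> ye dvd yc" "yc dvd yg \<or> yg dvd yc" "yg dvd ya \<or> ya dvd yg"
    and "\<not> yb dvd yd" "\<not> yd dvd yb" "\<not> ya dvd ye" "\<not> ye dvd ya"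
        "\<not> ye dvd yf" "\<not> yf dvd ye" "\<not> yb dvd yc" "\<not> yc dvd yb"
        "\<not> ye dvd yg" "\<not> yg dvd ye" "\<not> ya dvd yc" "\<not> yc dvd ya"
        "\<not> yg dvd yb" "\<not> yb dvd yg"
  shows False
  using assms by (metis dvd_trans)

lemma good_pair:
  assumes "cring R" "graph_diam (zdg_vertices R) (zdg_adj R) = 1"
  shows "\<exists>a b. a \<in> carrier R \<and> b \<in> carrier R \<and> a \<noteq> \<zero>\<^bsub>R\<^esub> \<and> b \<noteq> \<zero>\<^bsub>R\<^esub>
     \<and> a \<noteq> b \<and> a \<otimes>\<^bsub>R\<^esub> b = \<zero>\<^bsub>R\<^esub> \<and> b \<otimes>\<^bsub>R\<^esub> a = \<zero>\<^bsub>R\<^esub>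
     \<and> a \<noteq> \<one>\<^bsub>R\<^esub> \<and> b \<noteq> \<one>\<^bsub>R\<^esub> \<and> \<one>\<^bsub>R\<^esub> \<noteq> \<zero>\<^bsub>R\<^esub>"
proof -
  interpret cring R by fact
  obtain a b where ab: "a \<in> zdg_vertices R" "b \<in> zdg_vertices R" "zdg_adj R a b"
    using diam1_edge[OF assms(2)] by blast
  then have c: "a \<in> carrier R" "b \<in> carrier R" "a \<noteq> \<zero>\<^bsub>R\<^esub>" "b \<noteq> \<zero>\<^bsub>R\<^esub>" "a \<noteq> b" "a \<otimes>\<^bsub>R\<^esub> b = \<zero>\<^bsub>R\<^esub>"
    unfolding zdg_vertices_def zero_divisors_def zdg_adj_def by auto
  then have "b \<otimes>\<^bsub>R\<^esub> a = \<zero>\<^bsub>R\<^esub>" using m_comm by simp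
  moreover have "a \<noteq> \<one>\<^bsub>R\<^esub>" using c by auto
  moreover have "b \<noteq> \<one>\<^bsub>R\<^esub>" using c \<open>b \<otimes>\<^bsub>R\<^esub> a = \<zero>\<^bsub>R\<^esub>\<close> by auto
  moreover have "\<one>\<^bsub>R\<^esub> \<noteq> \<zero>\<^bsub>R\<^esub>" using c by (metis r_one r_null)
  ultimately show ?thesis using c by blast
qed

lemma dg_facts:
  assumes "bij_betw f V T" "\<forall>a\<in>V. \<forall>b\<in>V. a \<noteq> b \<longrightarrow> (E a b \<longleftrightarrow> (f a dvd f b \<or> f b dvd f a))"
    "u \<in> V" "v \<in> V" "u \<noteq> v"
  shows "E u v \<Longrightarrow> f u dvd f v \<or> f v dvd f u"
    and "\<not> E u v \<Longrightarrow> \<not> f u dvd f v \<and> \<not> f v dvd f u"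
    and "f u \<noteq> f v"
  using assms by (auto simp: bij_betw_def inj_on_def)

theorem theorem2p4:
  fixes R1 :: "('a, 'm) ring_scheme" and R2 :: "('b, 'n) ring_scheme"
  assumes "principal_ideal_ring R1" and "principal_ideal_ring R2"
    and "finite (carrier R1)" and "finite (carrier R2)"
    and "graph_diam (zdg_vertices R1) (zdg_adj R1) = 1"
    and "graph_diam (zdg_vertices R2) (zdg_adj R2) = 1"
  shows "\<not> is_divisor_graph (zdg_vertices (RDirProd R1 R2)) (zdg_compl_adj (RDirProd R1 R2))"
proof
  have cr1: "cring R1" and cr2: "cring R2" using assms(1,2) unfolding principal_ideal_ring_def by auto
  interpret A: cring R1 by (rule cr1)
  interpret B: cring R2 by (rule cr2)
  obtain a1 b1 where p1: "a1 \<in> carrier R1" "b1 \<in> carrier R1" "a1 \<noteq> \<zero>\<^bsub>R1\<^esub>" "b1 \<noteq> \<zero>\<^bsub>R1\<^esub>"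
     "a1 \<noteq> b1" "a1 \<otimes>\<^bsub>R1\<^esub> b1 = \<zero>\<^bsub>R1\<^esub>" "b1 \<otimes>\<^bsub>R1\<^esub> a1 = \<zero>\<^bsub>R1\<^esub>"
     "a1 \<noteq> \<one>\<^bsub>R1\<^esub>" "b1 \<noteq> \<one>\<^bsub>R1\<^esub>" "\<one>\<^bsub>R1\<^esub> \<noteq> \<zero>\<^bsub>R1\<^esub>"
    using good_pair[OF cr1 assms(5)] by blast
  obtain a2 b2 where p2: "a2 \<in> carrier R2" "b2 \<in> carrier R2" "a2 \<noteq> \<zero>\<^bsub>R2\<^esub>" "b2 \<noteq> \<zero>\<^bsub>R2\<^esub>"
     "a2 \<noteq> b2" "a2 \<otimes>\<^bsub>R2\<^esub> b2 = \<zero>\<^bsub>R2\<^esub>" "b2 \<otimes>\<^bsub>R2\<^esub> a2 = \<zero>\<^bsub>R2\<^esub>"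
     "a2 \<noteq> \<one>\<^bsub>R2\<^esub>" "b2 \<noteq> \<one>\<^bsub>R2\<^esub>" "\<one>\<^bsub>R2\<^esub> \<noteq> \<zero>\<^bsub>R2\<^esub>"
    using good_pair[OF cr2 assms(6)] by blast
  let ?R = "RDirProd R1 R2"
  let ?V = "zdg_vertices ?R"
  let ?E = "zdg_compl_adj ?R"
  assume "is_divisor_graph ?V ?E"
  then obtain T and f :: "'a \<times> 'b \<Rightarrow> nat" where f: "bij_betw f ?V T"
    "\<forall>a\<in>?V. \<forall>b\<in>?V. a \<noteq> b \<longrightarrow> (?E a b \<longleftrightarrow> (f a dvd f b \<or> f b dvd f a))"
    unfolding is_divisor_graph_def by blast
  define v1 where "v1 = (\<zero>\<^bsub>R1\<^esub>, \<one>\<^bsub>R2\<^esub>)"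
  define v2 where "v2 = (\<zero>\<^bsub>R1\<^esub>, a2)"
  define v3 where "v3 = (\<one>\<^bsub>R1\<^esub>, \<zero>\<^bsub>R2\<^esub>)"
  define v4 where "v4 = (\<one>\<^bsub>R1\<^esub>, b2)"
  define v5 where "v5 = (a1, \<zero>\<^bsub>R2\<^esub>)"
  define v6 where "v6 = (b1, \<one>\<^bsub>R2\<^esub>)"
  define v7 where "v7 = (b1, b2)"
  have memI: "\<And>x y z w. x \<in> carrier R1 \<Longrightarrow> y \<in> carrier R2 \<Longrightarrow> z \<in> carrier R1 \<Longrightarrow> w \<in> carrier R2
     \<Longrightarrow> (x,y) \<noteq> (\<zero>\<^bsub>R1\<^esub>, \<zero>\<^bsub>R2\<^esub>) \<Longrightarrow> (z,w) \<noteq> (\<zero>\<^bsub>R1\<^esub>, \<zero>\<^bsub>R2\<^esub>)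
     \<Longrightarrow> x \<otimes>\<^bsub>R1\<^esub> z = \<zero>\<^bsub>R1\<^esub> \<Longrightarrow> y \<otimes>\<^bsub>R2\<^esub> w = \<zero>\<^bsub>R2\<^esub> \<Longrightarrow> (x,y) \<in> ?V"
    unfolding zdg_vertices_def zero_divisors_def RDirProd_carrier RDP_zero
    by (auto simp: RDP_mult)
  have V: "v1 \<in> ?V" "v2 \<in> ?V" "v3 \<in> ?V" "v4 \<in> ?V" "v5 \<in> ?V" "v6 \<in> ?V" "v7 \<in> ?V"
    unfolding v1_def v2_def v3_def v4_def v5_def v6_def v7_def
    using p1 p2
    apply -
    apply (rule memI[of _ _ "\<one>\<^bsub>R1\<^esub>" "\<zero>\<^bsub>R2\<^esub>"]; simp)
    apply (rule memI[of _ _ "\<one>\<^bsub>R1\<^esub>" "\<zero>\<^bsub>R2\<^esub>"]; simp)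
    apply (rule memI[of _ _ "\<zero>\<^bsub>R1\<^esub>" "\<one>\<^bsub>R2\<^esub>"]; simp)
    apply (rule memI[of _ _ "\<zero>\<^bsub>R1\<^esub>" "a2"]; simp)
    apply (rule memI[of _ _ "\<zero>\<^bsub>R1\<^esub>" "\<one>\<^bsub>R2\<^esub>"]; simp)
    apply (rule memI[of _ _ "a1" "\<zero>\<^bsub>R2\<^esub>"]; simp)
    apply (rule memI[of _ _ "a1" "\<zero>\<^bsub>R2\<^esub>"]; simp)
    done
  have adjE: "\<And>x y z w. ?E (x,y) (z,w) \<longleftrightarrow> (x,y) \<noteq> (z,w) \<and>
      \<not> (x \<otimes>\<^bsub>R1\<^esub> z = \<zero>\<^bsub>R1\<^esub> \<and> y \<otimes>\<^bsub>R2\<^esub> w = \<zero>\<^bsub>R2\<^esub>)"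
    unfolding zdg_compl_adj_def RDP_mult RDP_zero by simp
  have e: "?E v1 v2" "?E v1 v4" "?E v4 v5" "?E v4 v6" "?E v6 v2" "?E v6 v3" "?E v3 v5" "?E v3 v7" "?E v7 v1"
    unfolding v1_def v2_def v3_def v4_def v5_def v6_def v7_def adjE using p1 p2 by auto
  have n: "\<not> ?E v2 v4" "\<not> ?E v1 v5" "\<not> ?E v5 v6" "\<not> ?E v2 v3" "\<not> ?E v5 v7" "\<not> ?E v1 v3" "\<not> ?E v7 v2"
    unfolding v1_def v2_def v3_def v4_def v5_def v6_def v7_def adjE using p1 p2 by auto
  have d: "v1 \<noteq> v2" "v1 \<noteq> v4" "v4 \<noteq> v5" "v4 \<noteq> v6" "v6 \<noteq> v2" "v6 \<noteq> v3" "v3 \<noteq> v5" "v3 \<noteq> v7" "v7 \<noteq> v1"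
    "v2 \<noteq> v4" "v1 \<noteq> v5" "v5 \<noteq> v6" "v2 \<noteq> v3" "v5 \<noteq> v7" "v1 \<noteq> v3" "v7 \<noteq> v2"
    unfolding v1_def v2_def v3_def v4_def v5_def v6_def v7_def using p1 p2 by auto
  note D = dg_facts[OF f(1) f(2)]
  have E0: "f v1 dvd f v2 \<or> f v2 dvd f v1" by (rule D(1)[OF V(1) V(2) d(1) e(1)])
  have E1: "f v1 dvd f v4 \<or> f v4 dvd f v1" by (rule D(1)[OF V(1) V(4) d(2) e(2)])
  have E2: "f v4 dvd f v5 \<or> f v5 dvd f v4" by (rule D(1)[OF V(4) V(5) d(3) e(3)])
  have E3: "f v4 dvd f v6 \<or> f v6 dvd f v4" by (rule D(1)[OF V(4) V(6) d(4) e(4)])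
  have E4: "f v6 dvd f v2 \<or> f v2 dvd f v6" by (rule D(1)[OF V(6) V(2) d(5) e(5)])
  have E5: "f v6 dvd f v3 \<or> f v3 dvd f v6" by (rule D(1)[OF V(6) V(3) d(6) e(6)])
  have E6: "f v3 dvd f v5 \<or> f v5 dvd f v3" by (rule D(1)[OF V(3) V(5) d(7) e(7)])
  have E7: "f v3 dvd f v7 \<or> f v7 dvd f v3" by (rule D(1)[OF V(3) V(7) d(8) e(8)])
  have E8: "f v7 dvd f v1 \<or> f v1 dvd f v7" by (rule D(1)[OF V(7) V(1) d(9) e(9)])
  have N0: "\<not> f v2 dvd f v4 \<and> \<not> f v4 dvd f v2" by (rule D(2)[OF V(2) V(4) d(10) n(1)])
  have N1: "\<not> f v1 dvd f v5 \<and> \<not> f v5 dvd f v1" by (rule D(2)[OF V(1) V(5) d(11) n(2)])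
  have N2: "\<not> f v5 dvd f v6 \<and> \<not> f v6 dvd f v5" by (rule D(2)[OF V(5) V(6) d(12) n(3)])
  have N3: "\<not> f v2 dvd f v3 \<and> \<not> f v3 dvd f v2" by (rule D(2)[OF V(2) V(3) d(13) n(4)])
  have N4: "\<not> f v5 dvd f v7 \<and> \<not> f v7 dvd f v5" by (rule D(2)[OF V(5) V(7) d(14) n(5)])
  have N5: "\<not> f v1 dvd f v3 \<and> \<not> f v3 dvd f v1" by (rule D(2)[OF V(1) V(3) d(15) n(6)])
  have N6: "\<not> f v7 dvd f v2 \<and> \<not> f v2 dvd f v7" by (rule D(2)[OF V(7) V(2) d(16) n(7)])
  have F: "f v1 \<noteq> f v2" by (rule D(3)[OF V(1) V(2) d(1)])
  show False using chain7[where ya="f v1" and yb="f v2" and yc="f v3" and yd="f v4" and ye="f v5" and yf="f v6" and yg="f v7"] F E0 E1 E2 E3 E4 E5 E6 E7 E8 N0 N1 N2 N3 N4 N5 N6 by blast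
qed
end
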